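(* Let $u\in\mathbb{R}^m$. If there exists $b\in\mathbb{R}^p$ with $\mathcal{P}(b)\neq\emptyset$ such that $$K^+\overline{g}_{\mathcal{P}}(u,b)+K^-\underline{g}_{\mathcal{P}}(u,b)\le b\quad\text{and}\quad L^+\overline{\psi}_{\mathcal{P}}(u,b)+L^-\underline{\psi}_{\mathcal{P}}(u,b)\le 0,$$ then $u$ is feasible, i.e. there exists $x\in\mathbb{R}^n$ with $f(x,u)=0$ and $h(x,u)\le 0$.
   Context: Let $f:\mathbb{R}^n\times\mathbb{R}^m\to\mathbb{R}^n$ and $h:\mathbb{R}^n\times\mathbb{R}^m\to\mathbb{R}^r$ be continuous and differentiable, with $f=M\psi$, $h=L\psi$ for a continuously differentiable $\psi:\mathbb{R}^n\times\mathbb{R}^m\to\mathbb{R}^q$ and constant matrices $M\in\mathbb{R}^{n\times q}$, $L\in\mathbb{R}^{r\times q}$. There is a base point $(x_0,u_0)$ with $f(x_0,u_0)=0$, $h(x_0,u_0)\le0$, at which $J_{f,0}=\frac{\partial f}{\partial x}\big|_{(x_0,u_0)}$ is nonsingular; $J_{\psi,0}=\frac{\partial \psi}{\partial x}\big|_{(x_0,u_0)}$ and $g(x,u)=\psi(x,u)-J_{\psi,0}x$. Let $\underline{g},\overline{g},\underline{\psi},\overline{\psi}:\mathbb{R}^n\times\mathbb{R}^m\to\mathbb{R}^q$ satisfy $\underline{g}_k\le g_k\le\overline{g}_k$ and $\underline{\psi}_k\le\psi_k\le\overline{\psi}_k$ everywhere for each $k$. A fixed matrix $A\in\mathbb{R}^{p\times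 n}$ is chosen so that $\mathcal{P}(b)=\{x:Ax\le b\}$ is bounded for every $b$. Define $\overline{g}_{\mathcal{P},k}(u,b)=\max_{x\in\mathcal{P}(b)}\overline{g}_k(x,u)$, $\underline{g}_{\mathcal{P},k}(u,b)=\min_{x\in\mathcal{P}(b)}\underline{g}_k(x,u)$, $\overline{\psi}_{\mathcal{P},k}(u,b)=\max_{x\in\mathcal{P}(b)}\overline{\psi}_k(x,u)$, $\underline{\psi}_{\mathcal{P},k}(u,b)=\min_{x\in\mathcal{P}(b)}\underline{\psi}_k(x,u)$ (assumed attained). Let $K=-AJ_{f,0}^{-1}M$. For a matrix $N$, $N^+$ keeps the positive entries of $N$ and sets others to $0$, and $N^-$ keeps the negative entries and sets others to $0$. $u$ is feasible if there is $x$ with $f(x,u)=0$ and $h(x,u)\le0$. Vector inequalities are componentwise. *)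

theory Defs
  imports "HOL-Analysis.Analysis"
begin

text \<open>Vector inequalities on real^'k are the library's componentwise order (less_eq_vec_def).\<close>

definition polyP :: "real^'n^'p \<Rightarrow> real^'p \<Rightarrow> (real^'n) set" where
  "polyP A b = {x. A *v x \<le> b}"

definition mat_pos :: "real^'c^'r \<Rightarrow> real^'c^'r" where
  "mat_pos N = (\<chi> i j. if N $ i $ j > 0 then N $ i $ j else 0)"

definition mat_neg :: "real^'c^'r \<Rightarrow> real^'c^'r" where
  "mat_neg N = (\<chi> i j. if N $ i $ j < 0 then N $ i $ j else 0)"

text \<open>Componentwise max / min over P(b) of a bounding function (maxima/minima are assumed attained
  in the theorem, so Sup/Inf coincide with Max/Min).\<close>
definition maxP :: "real^'n^'p \<Rightarrow> (real^'n \<Rightarrow> real^'m \<Rightarrow> real^'q) \<Rightarrow> real^'m \<Rightarrow> real^'p \<Rightarrow> real^'q" where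
  "maxP A F u b = (\<chi> k. Sup ((\<lambda>x. F x u $ k) ` polyP A b))"

definition minP :: "real^'n^'p \<Rightarrow> (real^'n \<Rightarrow> real^'m \<Rightarrow> real^'q) \<Rightarrow> real^'m \<Rightarrow> real^'p \<Rightarrow> real^'q" where
  "minP A F u b = (\<chi> k. Inf ((\<lambda>x. F x u $ k) ` polyP A b))"

end

theory Submission
  imports Defs "HOL-Analysis.Analysis"
begin


lemma bound_lemma:
  fixes N :: "real^'c^'r" and g lo hi :: "real^'c"
  assumes "lo \<le> g" "g \<le> hi"
  shows "N *v g \<le> mat_pos N *v hi + mat_neg N *v lo"
proof -
  have "\<And>i. (N *v g)$i \<le> (mat_pos N *v hi + mat_neg N *v lo)$i"
  proof -
    fix i
    have t: "\<And>j. N$i$j * g$j \<le> mat_pos N $i$j * hi$j + mat_neg N $i$j * lo$j"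
    proof -
      fix j
      have "lo$j \<le> g$j" "g$j \<le> hi$j" using assms by (auto simp: less_eq_vec_def)
      then show "N$i$j * g$j \<le> mat_pos N $i$j * hi$j + mat_neg N $i$j * lo$j"
        by (auto simp: mat_pos_def mat_neg_def intro: mult_left_mono mult_left_mono_neg)
    qed
    have "(N *v g)$i = (\<Sum>j\<in>UNIV. N$i$j * g$j)" by (simp add: matrix_vector_mult_def)
    also have "\<dots> \<le> (\<Sum>j\<in>UNIV. mat_pos N $i$j * hi$j + mat_neg N $i$j * lo$j)"
      by (rule sum_mono) (rule t)
    also have "\<dots> = (mat_pos N *v hi + mat_neg N *v lo)$i"
      by (simp add: matrix_vector_mult_def sum.distrib)
    finally show "(N *v g)$i \<le> (mat_pos N *v hi + mat_neg N *v lo)$i" .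
  qed
  then show ?thesis by (simp add: less_eq_vec_def)
qed

lemma polyP_inter: "polyP A b = (\<Inter>i. {x. A$i \<bullet> x \<le> b$i})"
  by (auto simp: polyP_def less_eq_vec_def matrix_vector_mul_component)

lemma polyP_compact: "bounded (polyP A b) \<Longrightarrow> compact (polyP A b)"
  unfolding compact_eq_bounded_closed polyP_inter
  by (auto intro!: closed_INT closed_halfspace_le)

lemma polyP_convex: "convex (polyP A b)"
  unfolding polyP_inter by (auto intro!: convex_INT convex_halfspace_le)

lemma max_bound:
  fixes F :: "'a \<Rightarrow> real^'k"
  assumes "\<exists>x\<in>S. \<forall>y\<in>S. F y $ k \<le> F x $ k" "z \<in> S"
  shows "F z $ k \<le> Sup ((\<lambda>x. F x $ k) ` S)"
proof -
  from assms(1) obtain x where "x\<in>S" "\<forall>y\<in>S. F y $ k \<le> F x $ k" by blast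
  then have "bdd_above ((\<lambda>x. F x $ k) ` S)" by (auto intro: bdd_aboveI2)
  then show ?thesis using assms(2) by (auto intro: cSup_upper)
qed

lemma min_bound:
  fixes F :: "'a \<Rightarrow> real^'k"
  assumes "\<exists>x\<in>S. \<forall>y\<in>S. F x $ k \<le> F y $ k" "z \<in> S"
  shows "Inf ((\<lambda>x. F x $ k) ` S) \<le> F z $ k"
proof -
  from assms(1) obtain x where "x\<in>S" "\<forall>y\<in>S. F x $ k \<le> F y $ k" by blast
  then have "bdd_below ((\<lambda>x. F x $ k) ` S)" by (auto intro: bdd_belowI2)
  then show ?thesis using assms(2) by (auto intro: cInf_lower)
qed

lemma mv_neg_right: "(N::real^'c^'r) *v (- x) = - (N *v x)"
  by (simp add: vec_eq_iff matrix_vector_mult_def sum_negf)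

lemma mv_neg_left: "(- (N::real^'c^'r)) *v x = - (N *v x)"
  by (simp add: vec_eq_iff matrix_vector_mult_def sum_negf)

lemma minP_le:
  fixes F G :: "real^'n \<Rightarrow> real^'m \<Rightarrow> real^'q"
  assumes att: "\<And>k. \<exists>x\<in>polyP A c. \<forall>y\<in>polyP A c. F x v $ k \<le> F y v $ k"
    and x: "x \<in> polyP A c" and le: "\<And>y. F y v \<le> G y v"
  shows "minP A F v c \<le> G x v"
  unfolding less_eq_vec_def minP_def
proof
  fix k
  have "Inf ((\<lambda>x. F x v $ k) ` polyP A c) \<le> F x v $ k"
    by (rule min_bound[of _ "\<lambda>x. F x v", OF att x])
  also have "\<dots> \<le> G x v $ k" using le[of x] by (simp add: less_eq_vec_def)
  finally show "(\<chi> k. Inf ((\<lambda>x. F x v $ k) ` polyP A c)) $ k \<le> G x v $ k" by simp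
qed

lemma maxP_ge:
  fixes F G :: "real^'n \<Rightarrow> real^'m \<Rightarrow> real^'q"
  assumes att: "\<And>k. \<exists>x\<in>polyP A c. \<forall>y\<in>polyP A c. F y v $ k \<le> F x v $ k"
    and x: "x \<in> polyP A c" and le: "\<And>y. G y v \<le> F y v"
  shows "G x v \<le> maxP A F v c"
  unfolding less_eq_vec_def maxP_def
proof
  fix k
  have "G x v $ k \<le> F x v $ k" using le[of x] by (simp add: less_eq_vec_def)
  also have "F x v $ k \<le> Sup ((\<lambda>x. F x v $ k) ` polyP A c)"
    by (rule max_bound[of _ "\<lambda>x. F x v", OF att x])
  finally show "G x v $ k \<le> (\<chi> k. Sup ((\<lambda>x. F x v $ k) ` polyP A c)) $ k" by simp
qed

theorem theorem3:
  fixes f :: "real^'n \<Rightarrow> real^'m \<Rightarrow> real^'n"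
    and h :: "real^'n \<Rightarrow> real^'m \<Rightarrow> real^'r"
    and \<psi> :: "real^'n \<Rightarrow> real^'m \<Rightarrow> real^'q"
    and M :: "real^'q^'n" and L :: "real^'q^'r"
    and x0 :: "real^'n" and u0 :: "real^'m"
    and Jf :: "real^'n^'n" and J\<psi> :: "real^'n^'q"
    and gl gu \<psi>l \<psi>u :: "real^'n \<Rightarrow> real^'m \<Rightarrow> real^'q"
    and A :: "real^'n^'p"
    and u :: "real^'m" and b :: "real^'p"
  assumes \<psi>_C1: "\<exists>D :: ((real^'n) \<times> (real^'m)) \<Rightarrow> (((real^'n) \<times> (real^'m)) \<Rightarrow>\<^sub>L (real^'q)).
              (\<forall>z. ((\<lambda>(x, v). \<psi> x v) has_derivative blinfun_apply (D z)) (at z)) \<and> continuous_on UNIV D"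
    and f_def: "\<And>x v. f x v = M *v \<psi> x v"
    and h_def: "\<And>x v. h x v = L *v \<psi> x v"
    and base_f: "f x0 u0 = 0"
    and base_h: "h x0 u0 \<le> 0"
    and Jf: "((\<lambda>x. f x u0) has_derivative (\<lambda>v. Jf *v v)) (at x0)"
    and Jf_inv: "invertible Jf"
    and J\<psi>: "((\<lambda>x. \<psi> x u0) has_derivative (\<lambda>v. J\<psi> *v v)) (at x0)"
    and g_bounds: "\<And>x v. gl x v \<le> \<psi> x v - J\<psi> *v x \<and> \<psi> x v - J\<psi> *v x \<le> gu x v"
    and \<psi>_bounds: "\<And>x v. \<psi>l x v \<le> \<psi> x v \<and> \<psi> x v \<le> \<psi>u x v"
    and P_bounded: "\<And>c. bounded (polyP A c)"
    and attained: "\<And>v c k. polyP A c \<noteq> {} \<Longrightarrow>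
        (\<exists>x\<in>polyP A c. \<forall>y\<in>polyP A c. gu y v $ k \<le> gu x v $ k) \<and>
        (\<exists>x\<in>polyP A c. \<forall>y\<in>polyP A c. gl x v $ k \<le> gl y v $ k) \<and>
        (\<exists>x\<in>polyP A c. \<forall>y\<in>polyP A c. \<psi>u y v $ k \<le> \<psi>u x v $ k) \<and>
        (\<exists>x\<in>polyP A c. \<forall>y\<in>polyP A c. \<psi>l x v $ k \<le> \<psi>l y v $ k)"
    and P_nonempty: "polyP A b \<noteq> {}"
    and condK: "mat_pos (- (A ** matrix_inv Jf ** M)) *v maxP A gu u b
              + mat_neg (- (A ** matrix_inv Jf ** M)) *v minP A gl u b \<le> b"
    and condL: "mat_pos L *v maxP A \<psi>u u b + mat_neg L *v minP A \<psi>l u b \<le> 0"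
  shows "\<exists>x. f x u = 0 \<and> h x u \<le> 0"

proof -
  define S where "S = polyP A b"
  define g where "g x = \<psi> x u - J\<psi> *v x" for x
  define Ji where "Ji = matrix_inv Jf"
  define T where "T x = - (Ji *v (M *v g x))" for x
  have JJi: "Jf ** Ji = mat 1"
    using Jf_inv unfolding invertible_def Ji_def matrix_inv_def by (rule someI_ex[THEN conjunct1])
  have "((\<lambda>x. f x u0) has_derivative (\<lambda>v. M *v (J\<psi> *v v))) (at x0)"
    unfolding f_def by (rule bounded_linear.has_derivative[OF matrix_vector_mul_bounded_linear J\<psi>])
  with Jf have "(\<lambda>v. Jf *v v) = (\<lambda>v. M *v (J\<psi> *v v))" by (rule has_derivative_unique)
  then have JfM: "Jf = M ** J\<psi>"
    by (metis matrix_eq matrix_vector_mul_assoc)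
  obtain D :: "((real^'n) \<times> (real^'m)) \<Rightarrow> (((real^'n) \<times> (real^'m)) \<Rightarrow>\<^sub>L (real^'q))"
    where D: "\<And>z. ((\<lambda>(x, v). \<psi> x v) has_derivative blinfun_apply (D z)) (at z)"
    using \<psi>_C1 by blast
  have cpsi: "continuous_on UNIV (\<lambda>x. \<psi> x u)"
  proof (rule continuous_at_imp_continuous_on, rule ballI)
    fix x :: "real^'n"
    have "isCont (\<lambda>(x, v). \<psi> x v) (x, u)" using D has_derivative_continuous by blast
    moreover have "isCont (\<lambda>x. (x, u)) x" by simp
    ultimately have "isCont ((\<lambda>(x, v). \<psi> x v) \<circ> (\<lambda>x. (x, u))) x"
      using continuous_at_compose by blast
    then show "isCont (\<lambda>x. \<psi> x u) x" by (simp add: o_def)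
  qed
  have cT: "continuous_on S T"
  proof -
    have c1: "continuous_on S (\<lambda>x. \<psi> x u - J\<psi> *v x)"
    proof (rule continuous_on_diff)
      show "continuous_on S (\<lambda>x. \<psi> x u)" using cpsi continuous_on_subset by blast
      show "continuous_on S (\<lambda>x. J\<psi> *v x)"
        by (rule linear_continuous_on) (rule matrix_vector_mul_bounded_linear)
    qed
    have c2: "continuous_on UNIV (\<lambda>y. - (Ji *v (M *v y)))"
      by (intro linear_continuous_on bounded_linear_minus bounded_linear_compose[OF matrix_vector_mul_bounded_linear matrix_vector_mul_bounded_linear])
    have "continuous_on S ((\<lambda>y. - (Ji *v (M *v y))) \<circ> (\<lambda>x. \<psi> x u - J\<psi> *v x))"
      by (rule continuous_on_compose[OF c1 continuous_on_subset[OF c2]]) simp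
    then show ?thesis unfolding T_def g_def o_def .
  qed
  have SK: "compact S" "convex S" "S \<noteq> {}"
    using polyP_compact[OF P_bounded] polyP_convex P_nonempty unfolding S_def by auto
  define K where "K = - (A ** matrix_inv Jf ** M)"
  have TS: "T \<in> S \<rightarrow> S"
  proof
    fix x assume xS: "x \<in> S"
    have lo: "minP A gl u b \<le> g x"
      using minP_le[of A b gl u x "\<lambda>x v. \<psi> x v - J\<psi> *v x"] attained[OF P_nonempty] xS g_bounds
      unfolding S_def g_def by blast
    have hi: "g x \<le> maxP A gu u b"
      using maxP_ge[of A b gu u x "\<lambda>x v. \<psi> x v - J\<psi> *v x"] attained[OF P_nonempty] xS g_bounds
      unfolding S_def g_def by blast
    have "A *v T x = K *v g x"
      unfolding T_def K_def Ji_def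
      by (simp add: matrix_vector_mul_assoc mv_neg_right mv_neg_left matrix_mul_assoc)
    also have "\<dots> \<le> b" using bound_lemma[OF lo hi, of K] condK unfolding K_def by (rule order_trans)
    finally show "T x \<in> S" unfolding S_def polyP_def by simp
  qed
  obtain x where xS: "x \<in> S" and fx: "T x = x" using brouwer[OF SK cT TS] by blast
  have "Jf *v x = Jf *v T x" using fx by simp
  also have "\<dots> = - (M *v g x)"
  proof -
    have "Jf *v (Ji *v (M *v g x)) = (Jf ** Ji) *v (M *v g x)" by (rule matrix_vector_mul_assoc)
    then show ?thesis unfolding T_def by (simp add: mv_neg_right JJi)
  qed
  finally have Jx: "Jf *v x = - (M *v g x)" .
  have "f x u = M *v (J\<psi> *v x + g x)" unfolding f_def g_def by simp
  also have "\<dots> = Jf *v x + M *v g x"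
    by (simp add: JfM matrix_vector_right_distrib matrix_vector_mul_assoc)
  also have "\<dots> = 0" using Jx by simp
  finally have f0: "f x u = 0" .
  have lo: "minP A \<psi>l u b \<le> \<psi> x u"
    using minP_le[of A b \<psi>l u x \<psi>] attained[OF P_nonempty] xS \<psi>_bounds
    unfolding S_def by blast
  have hi: "\<psi> x u \<le> maxP A \<psi>u u b"
    using maxP_ge[of A b \<psi>u u x \<psi>] attained[OF P_nonempty] xS \<psi>_bounds
    unfolding S_def by blast
  have "h x u \<le> 0" unfolding h_def using bound_lemma[OF lo hi, of L] condL by (rule order_trans)
  with f0 show ?thesis by blast
qed

end
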